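(* Let $\omega$ be a weight function with associated weight matrix $\{W^x\}_{x>0}$. If there exist $x,y>0$ and $A>0$ with $\sum_{\ell\ge k}\frac1{\vartheta^y_\ell}\le A\frac{k}{\vartheta^x_k}$ for all $k\in\mathbb{N}_{>0}$, then $\omega$ is strong.
   Context: A weight function is a continuous increasing $\omega:[0,\infty)\to[0,\infty)$ with $\omega(0)=0$, $\omega(t)\to\infty$, $\omega(2t)=O(\omega(t))$, $\omega(t)=O(t)$, $\log t=o(\omega(t))$, and $\varphi(t)=\omega(e^t)$ convex; normalized with $\omega|_{[0,1]}=0$, $\varphi^*(t)=\sup_{s\ge0}(st-\varphi(s))$, $W^x_k=\exp(\frac1x\varphi^*(xk))$, $\vartheta^x_k=W^x_k/W^x_{k-1}$. $\omega$ is strong if there is $C>0$ with $\int_1^\infty\frac{\omega(tu)}{u^2}du\le C\omega(t)+C$ for all $t>0$. *)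

theory Defs
  imports "HOL-Analysis.Analysis" "HOL-Library.Landau_Symbols"
begin

definition weight_function :: "(real \<Rightarrow> real) \<Rightarrow> bool" where
  "weight_function \<omega> \<longleftrightarrow>
     continuous_on {0..} \<omega> \<and>
     mono_on {0..} \<omega> \<and>
     (\<forall>t\<ge>0. \<omega> t \<ge> 0) \<and>
     \<omega> 0 = 0 \<and>
     filterlim \<omega> at_top at_top \<and>
     (\<lambda>t. \<omega> (2 * t)) \<in> O[at_top](\<omega>) \<and>
     \<omega> \<in> O[at_top](\<lambda>t. t) \<and>
     ln \<in> o[at_top](\<omega>) \<and>
     convex_on UNIV (\<lambda>t. \<omega> (exp t))"

definition normalized_weight :: "(real \<Rightarrow> real) \<Rightarrow> bool" where
  "normalized_weight \<omega> \<longleftrightarrow> (\<forall>t\<in>{0..1}. \<omega> t = 0)"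

definition wphi :: "(real \<Rightarrow> real) \<Rightarrow> real \<Rightarrow> real" where
  "wphi \<omega> t = \<omega> (exp t)"

definition wphi_star :: "(real \<Rightarrow> real) \<Rightarrow> real \<Rightarrow> real" where
  "wphi_star \<omega> t = (SUP s\<in>{0..}. s * t - wphi \<omega> s)"

definition wmat :: "(real \<Rightarrow> real) \<Rightarrow> real \<Rightarrow> nat \<Rightarrow> real" where
  "wmat \<omega> x k = exp (wphi_star \<omega> (x * real k) / x)"

text \<open>theta^x_k = W^x_k / W^x_{k-1} (used for k >= 1)\<close>
definition wtheta :: "(real \<Rightarrow> real) \<Rightarrow> real \<Rightarrow> nat \<Rightarrow> real" where
  "wtheta \<omega> x k = wmat \<omega> x k / wmat \<omega> x (k - 1)"

definition strong_weight :: "(real \<Rightarrow> real) \<Rightarrow> bool" where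
  "strong_weight \<omega> \<longleftrightarrow> (\<exists>C>0. \<forall>t>0.
     (\<integral>\<^sup>+ u. ennreal (\<omega> (t * u) / u\<^sup>2) * indicator {1..} u \<partial>lborel)
       \<le> ennreal (C * \<omega> t + C))"

end

theory Submission
  imports Defs
begin

context
  fixes \<omega> :: "real \<Rightarrow> real"
  assumes wf: "weight_function \<omega>" and nw: "normalized_weight \<omega>"
begin

lemma om_mono: "0 \<le> a \<Longrightarrow> a \<le> b \<Longrightarrow> \<omega> a \<le> \<omega> b"
  using wf unfolding weight_function_def mono_on_def by auto

lemma om_nonneg: "0 \<le> a \<Longrightarrow> 0 \<le> \<omega> a"
  using wf unfolding weight_function_def by auto

lemma om_small: "0 \<le> a \<Longrightarrow> a \<le> 1 \<Longrightarrow> \<omega> a = 0"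
  using nw unfolding normalized_weight_def by auto

lemma phi_mono: "a \<le> b \<Longrightarrow> wphi \<omega> a \<le> wphi \<omega> b"
  unfolding wphi_def by (intro om_mono) auto

lemma phi_nonneg: "0 \<le> wphi \<omega> a"
  unfolding wphi_def by (intro om_nonneg) auto

lemma phi_0: "wphi \<omega> 0 = 0"
  unfolding wphi_def by (intro om_small) auto

lemma phi_convex: "convex_on UNIV (wphi \<omega>)"
  using wf unfolding weight_function_def wphi_def[abs_def] by auto

lemma om_doubling: "\<exists>D\<ge>1. \<forall>v\<ge>0. \<omega> (exp 1 * v) \<le> D * \<omega> v + D"
proof -
  have "(\<lambda>t. \<omega> (2 * t)) \<in> O[at_top](\<omega>)" using wf unfolding weight_function_def by auto
  then obtain c where c: "c > 0" and ev: "eventually (\<lambda>t. norm (\<omega> (2*t)) \<le> c * norm (\<omega> t)) at_top"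
    by (auto elim!: landau_o.bigE)
  then obtain T where T: "\<And>t. t \<ge> T \<Longrightarrow> norm (\<omega> (2*t)) \<le> c * norm (\<omega> t)"
    by (auto simp: eventually_at_top_linorder)
  define K where "K = \<omega> (2 * max T 0)"
  have K0: "K \<ge> 0" unfolding K_def by (intro om_nonneg) auto
  have dbl: "\<omega> (2*t) \<le> c * \<omega> t + K" if "t \<ge> 0" for t
  proof (cases "t \<ge> T")
    case True
    then show ?thesis using T[OF True] om_nonneg[of t] om_nonneg[of "2*t"] that K0 by auto
  next
    case False
    then have "\<omega> (2*t) \<le> K" unfolding K_def using that by (intro om_mono) auto
    then show ?thesis using c om_nonneg[OF that] by (smt (verit) mult_nonneg_nonneg)
  qed
  define D where "D = c*c + c*K + K + 1"
  have "\<omega> (exp 1 * v) \<le> D * \<omega> v + D" if v: "v \<ge> 0" for v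
  proof -
    have "exp (1::real) \<le> 4" using exp_le by (smt (verit) exp_le_cancel_iff exp_less_cancel_iff exp_ln ln_2_less_1 ln_less_cancel_iff exp_gt_zero)
    then have "\<omega> (exp 1 * v) \<le> \<omega> (2 * (2 * v))" using v by (intro om_mono) (auto intro: mult_right_mono)
    also have "\<dots> \<le> c * \<omega> (2 * v) + K" using dbl[of "2 * v"] v by auto
    also have "\<dots> \<le> c * (c * \<omega> v + K) + K" using dbl[OF v] c by (intro add_mono mult_left_mono) auto
    also have "\<dots> \<le> D * \<omega> v + D" unfolding D_def using om_nonneg[OF v] c K0
      by (simp add: algebra_simps)
    finally show ?thesis .
  qed
  moreover have "D \<ge> 1" unfolding D_def using c K0 by (simp add: add_nonneg_nonneg)
  ultimately show ?thesis by blast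
qed

lemma ln_small: "e > 0 \<Longrightarrow> \<exists>T\<ge>1. \<forall>v\<ge>T. ln v \<le> e * \<omega> v"
proof -
  assume e: "e > 0"
  have "ln \<in> o[at_top](\<omega>)" using wf unfolding weight_function_def by auto
  from landau_o.smallD[OF this e] have "eventually (\<lambda>t. norm (ln t) \<le> e * norm (\<omega> t)) at_top" .
  then obtain T where T: "\<And>t. t \<ge> T \<Longrightarrow> norm (ln t) \<le> e * norm (\<omega> t)"
    by (auto simp: eventually_at_top_linorder)
  show ?thesis
  proof (intro exI[of _ "max T 1"] conjI allI impI)
    fix v assume "max T 1 \<le> v"
    then show "ln v \<le> e * \<omega> v" using T[of v] om_nonneg[of v] by auto
  qed auto
qed

end


context
  fixes \<omega> :: "real \<Rightarrow> real"
  assumes wf: "weight_function \<omega>" and nw: "normalized_weight \<omega>"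
begin

lemma star_bdd: assumes "\<tau> \<ge> 0" shows "bdd_above ((\<lambda>s. s * \<tau> - wphi \<omega> s) ` {0..})"
proof -
  obtain T where T: "T \<ge> 1" "\<And>v. v \<ge> T \<Longrightarrow> ln v \<le> (1 / (\<tau> + 1)) * \<omega> v"
    using ln_small[OF wf nw, of "1/(\<tau>+1)"] assms by auto
  show ?thesis unfolding bdd_above_def
  proof (intro exI[of _ "\<tau> * ln T"] ballI)
    fix z assume "z \<in> (\<lambda>s. s * \<tau> - wphi \<omega> s) ` {0..}"
    then obtain s where s: "s \<ge> 0" "z = s * \<tau> - wphi \<omega> s" by auto
    show "z \<le> \<tau> * ln T"
    proof (cases "s \<le> ln T")
      case True
      then show ?thesis using s phi_nonneg[OF wf nw, of s] assms
        by (smt (verit) mult.commute mult_left_mono)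
    next
      case False
      then have "exp s \<ge> T" using T(1) by (metis exp_ln less_le_not_le linorder_linear exp_le_cancel_iff  order_less_le_trans zero_less_one)
      from T(2)[OF this] have "s \<le> (1 / (\<tau> + 1)) * wphi \<omega> s" by (simp add: wphi_def)
      then have "(\<tau> + 1) * s \<le> wphi \<omega> s" using assms by (simp add: field_simps)
      then have "z \<le> 0" using s assms by (simp add: algebra_simps)
      moreover have "\<tau> * ln T \<ge> 0" using T(1) assms by simp
      ultimately show ?thesis by linarith
    qed
  qed
qed

lemma young: "\<tau> \<ge> 0 \<Longrightarrow> s \<ge> 0 \<Longrightarrow> s * \<tau> - wphi \<omega> s \<le> wphi_star \<omega> \<tau>"
  unfolding wphi_star_def by (rule cSUP_upper[OF _ star_bdd]) auto

lemma star_le: "(\<And>s. s \<ge> 0 \<Longrightarrow> s * \<tau> - wphi \<omega> s \<le> B) \<Longrightarrow> wphi_star \<omega> \<tau> \<le> B"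
  unfolding wphi_star_def by (rule cSUP_least) auto

lemma star_0: "wphi_star \<omega> 0 = 0"
proof (rule antisym)
  show "wphi_star \<omega> 0 \<le> 0" by (rule star_le) (use phi_nonneg[OF wf nw] in auto)
  show "0 \<le> wphi_star \<omega> 0" using young[of 0 0] phi_0[OF wf nw] by simp
qed

lemma star_mono: "0 \<le> a \<Longrightarrow> a \<le> b \<Longrightarrow> wphi_star \<omega> a \<le> wphi_star \<omega> b"
proof (rule star_le)
  fix s :: real assume "0 \<le> a" "a \<le> b" "s \<ge> 0"
  then have "s * a - wphi \<omega> s \<le> s * b - wphi \<omega> s" by (simp add: mult_left_mono)
  also have "\<dots> \<le> wphi_star \<omega> b" using young[of b s] \<open>0 \<le> a\<close> \<open>a \<le> b\<close> \<open>s \<ge> 0\<close> by simp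
  finally show "s * a - wphi \<omega> s \<le> wphi_star \<omega> b" .
qed

lemma star_nonneg: "0 \<le> a \<Longrightarrow> 0 \<le> wphi_star \<omega> a"
  using star_mono[of 0 a] star_0 by simp

lemma star_mid: "0 \<le> a \<Longrightarrow> 0 \<le> b \<Longrightarrow> 2 * wphi_star \<omega> ((a + b) / 2) \<le> wphi_star \<omega> a + wphi_star \<omega> b"
proof -
  assume a: "0 \<le> a" and b: "0 \<le> b"
  have "wphi_star \<omega> ((a + b) / 2) \<le> (wphi_star \<omega> a + wphi_star \<omega> b) / 2"
  proof (rule star_le)
    fix s :: real assume s: "s \<ge> 0"
    have "s * ((a + b) / 2) - wphi \<omega> s = ((s * a - wphi \<omega> s) + (s * b - wphi \<omega> s)) / 2"
      by (simp add: field_simps)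
    also have "\<dots> \<le> (wphi_star \<omega> a + wphi_star \<omega> b) / 2"
      using young[OF a s] young[OF b s] by simp
    finally show "s * ((a + b) / 2) - wphi \<omega> s \<le> (wphi_star \<omega> a + wphi_star \<omega> b) / 2" .
  qed
  then show ?thesis by simp
qed

definition dd :: "real \<Rightarrow> nat \<Rightarrow> real" where
  "dd z l = (wphi_star \<omega> (z * real (Suc l)) - wphi_star \<omega> (z * real l)) / z"

lemma dd_nonneg: "z > 0 \<Longrightarrow> 0 \<le> dd z l"
  unfolding dd_def by (intro divide_nonneg_pos) (auto intro!: star_mono simp: diff_le_eq)

lemma dd_mono: assumes z: "z > 0" shows "mono (dd z)"
proof (rule incseq_SucI, unfold dd_def)
  fix l
  have "2 * wphi_star \<omega> ((z * real l + z * real (Suc (Suc l))) / 2) \<le> wphi_star \<omega> (z * real l) + wphi_star \<omega> (z * real (Suc (Suc l)))"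
    using z by (intro star_mid) auto
  moreover have "(z * real l + z * real (Suc (Suc l))) / 2 = z * real (Suc l)" by (simp add: field_simps)
  ultimately have "2 * wphi_star \<omega> (z * real (Suc l)) \<le> wphi_star \<omega> (z * real l) + wphi_star \<omega> (z * real (Suc (Suc l)))" by simp
  then show "(wphi_star \<omega> (z * real (Suc l)) - wphi_star \<omega> (z * real l)) / z
        \<le> (wphi_star \<omega> (z * real (Suc (Suc l))) - wphi_star \<omega> (z * real (Suc l))) / z"
    using z by (intro divide_right_mono) auto
qed

lemma dd_sum: "z > 0 \<Longrightarrow> (\<Sum>l<k. dd z l) = wphi_star \<omega> (z * real k) / z"
  by (induction k) (auto simp: dd_def star_0 field_simps)

lemma wtheta_dd: "z > 0 \<Longrightarrow> wtheta \<omega> z (Suc l) = exp (dd z l)"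
  unfolding wtheta_def wmat_def dd_def by (simp add: exp_diff[symmetric] diff_divide_distrib)

lemma young_seq: assumes z: "z > 0" and v: "v \<ge> 1"
  shows "z * (\<Sum>l<k. (ln v - dd z l)) \<le> \<omega> v"
proof -
  have "ln v * (z * real k) - wphi \<omega> (ln v) \<le> wphi_star \<omega> (z * real k)"
    using z v by (intro young) auto
  moreover have "wphi \<omega> (ln v) = \<omega> v" using v by (simp add: wphi_def)
  moreover have "z * (\<Sum>l<k. (ln v - dd z l)) = ln v * (z * real k) - wphi_star \<omega> (z * real k)"
    using z by (simp add: sum_subtractf dd_sum algebra_simps)
  ultimately show ?thesis by linarith
qed

end


context
  fixes \<omega> :: "real \<Rightarrow> real"
  assumes wf: "weight_function \<omega>" and nw: "normalized_weight \<omega>"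
begin

lemma count_ex: assumes z: "z > 0" and t: "t > 0"
  shows "\<exists>M. (\<forall>l. dd \<omega> z l \<le> ln t \<longleftrightarrow> l < M) \<and> z * real M \<le> \<omega> (exp 1 * t)"
proof -
  define S where "S = {m. \<forall>l<m. dd \<omega> z l \<le> ln t}"
  have bnd: "z * real m \<le> \<omega> (exp 1 * t)" if "m \<in> S" for m
  proof (cases "m = 0")
    case True then show ?thesis using om_nonneg[OF wf nw, of "exp 1 * t"] t by simp
  next
    case False
    then have "dd \<omega> z 0 \<le> ln t" using that unfolding S_def by auto
    then have "ln t \<ge> 0" using dd_nonneg[OF wf nw z, of 0] by linarith
    then have "t \<ge> 1" using t by (simp add: ln_ge_zero_iff)
    then have v: "exp 1 * t \<ge> 1" using mult_mono[of 1 "exp 1" 1 t] by simp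
    have "z * (\<Sum>l<m. (ln (exp 1 * t) - dd \<omega> z l)) \<le> \<omega> (exp 1 * t)"
      by (rule young_seq[OF wf nw z v])
    moreover have "(\<Sum>l<m. (1::real)) \<le> (\<Sum>l<m. (ln (exp 1 * t) - dd \<omega> z l))"
      using that t unfolding S_def by (intro sum_mono) (auto simp: ln_mult)
    then have "z * real m \<le> z * (\<Sum>l<m. (ln (exp 1 * t) - dd \<omega> z l))"
      using z by (intro mult_left_mono) auto
    ultimately show ?thesis by linarith
  qed
  have fin: "finite S"
  proof (rule finite_subset[of _ "{..nat \<lceil>\<omega> (exp 1 * t) / z\<rceil>}"])
    show "S \<subseteq> {..nat \<lceil>\<omega> (exp 1 * t) / z\<rceil>}"
    proof
      fix m assume "m \<in> S"
      from bnd[OF this] z have "real m \<le> \<omega> (exp 1 * t) / z" by (simp add: field_simps)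
      then show "m \<in> {..nat \<lceil>\<omega> (exp 1 * t) / z\<rceil>}" by (simp add: nat_le_iff) linarith
    qed
  qed auto
  have "0 \<in> S" unfolding S_def by auto
  define M where "M = Max S"
  have MS: "M \<in> S" unfolding M_def using fin \<open>0 \<in> S\<close> by (intro Max_in) auto
  have "dd \<omega> z l \<le> ln t \<longleftrightarrow> l < M" for l
  proof
    assume "l < M" then show "dd \<omega> z l \<le> ln t" using MS unfolding S_def by auto
  next
    assume h: "dd \<omega> z l \<le> ln t"
    have "Suc l \<in> S" unfolding S_def
    proof (intro CollectI allI impI)
      fix i assume "i < Suc l"
      then have "dd \<omega> z i \<le> dd \<omega> z l" using dd_mono[OF wf nw z] by (simp add: monoD)
      then show "dd \<omega> z i \<le> ln t" using h by linarith
    qed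
    then have "Suc l \<le> M" unfolding M_def using fin by (intro Max_ge) auto
    then show "l < M" by simp
  qed
  then show ?thesis using bnd[OF MS] by blast
qed

lemma arith_aux: "(w::real) \<le> a + b + (w + 1) / 2 \<Longrightarrow> b \<le> w / 4 + c \<Longrightarrow> w \<le> 4 * a + (4 * c + 2)"
  by (simp add: field_simps)

lemma upper: assumes y: "y > 0"
  shows "\<exists>C5\<ge>0. \<forall>v\<ge>1. \<exists>k. \<omega> v \<le> 4 * y * (\<Sum>l<k. max 0 (ln v - dd \<omega> y l)) + C5"
proof -
  obtain D where D: "D \<ge> 1" "\<And>v. v \<ge> 0 \<Longrightarrow> \<omega> (exp 1 * v) \<le> D * \<omega> v + D"
    using om_doubling[OF wf nw] by auto
  obtain T where T: "T \<ge> 1" "\<And>v. v \<ge> T \<Longrightarrow> ln v \<le> (1 / (4 * y)) * \<omega> v"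
    using ln_small[OF wf nw, of "1/(4*y)"] y by auto
  have lnb: "y * ln v \<le> \<omega> v / 4 + y * ln T" if "v \<ge> 1" for v
  proof (cases "v \<ge> T")
    case True
    then have "ln v \<le> (1 / (4 * y)) * \<omega> v" by (rule T(2))
    then have "y * ln v \<le> \<omega> v / 4" using y by (simp add: field_simps)
    moreover have "y * ln T \<ge> 0" using y T by simp
    ultimately show ?thesis by linarith
  next
    case False
    then have "ln v \<le> ln T" using that by simp
    then have "y * ln v \<le> y * ln T" using y by (intro mult_left_mono) auto
    moreover have "\<omega> v \<ge> 0" using that by (intro om_nonneg[OF wf nw]) auto
    ultimately show ?thesis by linarith
  qed
  define C5 where "C5 = 4 * y * ln T + 2"
  have "\<exists>k. \<omega> v \<le> 4 * y * (\<Sum>l<k. max 0 (ln v - dd \<omega> y l)) + C5" if v: "v \<ge> 1" for v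
  proof -
    define s0 where "s0 = ln v"
    have s0: "s0 \<ge> 0" using v unfolding s0_def by simp
    define h where "h = 1 / (2 * D)"
    have h: "h > 0" "h \<le> 1" using D unfolding h_def by auto
    define \<tau> where "\<tau> = (wphi \<omega> (s0 + h) - wphi \<omega> s0) / h"
    have tau0: "\<tau> \<ge> 0" unfolding \<tau>_def using h phi_mono[OF wf nw, of s0 "s0+h"] by auto
    have cvx: "convex_on UNIV (wphi \<omega>)" by (rule phi_convex[OF wf nw])
    have key: "wphi_star \<omega> \<tau> \<le> s0 * \<tau> - wphi \<omega> s0 + h * \<tau>"
    proof (rule star_le[OF wf nw])
      fix s :: real assume "s \<ge> 0"
      consider "s < s0" | "s = s0" | "s0 < s" "s < s0 + h" | "s = s0 + h" | "s > s0 + h" by linarith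
      then show "s * \<tau> - wphi \<omega> s \<le> s0 * \<tau> - wphi \<omega> s0 + h * \<tau>"
      proof cases
        case 1
        have "(wphi \<omega> s - wphi \<omega> s0) / (s - s0) \<le> (wphi \<omega> s0 - wphi \<omega> (s0 + h)) / (s0 - (s0 + h))"
          using convex_on_slope_le[OF cvx, of s "s0 + h" s0] 1 h by auto
        also have "\<dots> = \<tau>" unfolding \<tau>_def using h by (simp add: field_simps)
        finally have "(wphi \<omega> s0 - wphi \<omega> s) \<le> \<tau> * (s0 - s)" using 1
          by (simp add: divide_le_eq field_simps split: if_splits)
        then show ?thesis using h tau0 by (simp add: algebra_simps) (smt (verit) mult_nonneg_nonneg)
      next
        case 2 then show ?thesis using h tau0 by simp
      next
        case 3
        have "wphi \<omega> s0 \<le> wphi \<omega> s" using 3 by (intro phi_mono[OF wf nw]) auto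
        moreover have "s * \<tau> \<le> (s0 + h) * \<tau>" using 3 tau0 by (intro mult_right_mono) auto
        ultimately show ?thesis by (simp add: algebra_simps)
      next
        case 4
        then show ?thesis unfolding \<tau>_def using h phi_mono[OF wf nw, of s0 "s0 + h"] by (simp add: field_simps)
      next
        case 5
        have "(wphi \<omega> s0 - wphi \<omega> (s0 + h)) / (s0 - (s0 + h)) \<le> (wphi \<omega> s0 - wphi \<omega> s) / (s0 - s)"
          using convex_on_slope_le[OF cvx, of s0 s "s0 + h"] 5 h by auto
        moreover have "(wphi \<omega> s0 - wphi \<omega> (s0 + h)) / (s0 - (s0 + h)) = \<tau>"
          unfolding \<tau>_def using h by (simp add: field_simps)
        moreover have "(wphi \<omega> s0 - wphi \<omega> s) / (s0 - s) = (wphi \<omega> s - wphi \<omega> s0) / (s - s0)"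
          by (metis minus_diff_eq minus_divide_divide)
        ultimately have "\<tau> \<le> (wphi \<omega> s - wphi \<omega> s0) / (s - s0)" by simp
        then have "\<tau> * (s - s0) \<le> wphi \<omega> s - wphi \<omega> s0" using 5 h
          by (simp add: le_divide_eq field_simps split: if_splits)
        then show ?thesis using h tau0 by (simp add: algebra_simps) (smt (verit) mult_nonneg_nonneg)
      qed
    qed
    have "wphi \<omega> (s0 + h) \<le> (1 - h) * wphi \<omega> s0 + h * wphi \<omega> (s0 + 1)"
    proof -
      have "wphi \<omega> ((1 - h) * s0 + h * (s0 + 1)) \<le> (1 - h) * wphi \<omega> s0 + h * wphi \<omega> (s0 + 1)"
        using h convex_onD[OF cvx, of h s0 "s0 + 1"] by simp
      moreover have "(1 - h) * s0 + h * (s0 + 1) = s0 + h" by (simp add: algebra_simps)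
      ultimately show ?thesis by simp
    qed
    moreover have "h * \<tau> = wphi \<omega> (s0 + h) - wphi \<omega> s0" unfolding \<tau>_def using h by simp
    moreover have "h * wphi \<omega> s0 \<ge> 0" using h phi_nonneg[OF wf nw, of s0] by simp
    moreover have "(1 - h) * wphi \<omega> s0 = wphi \<omega> s0 - h * wphi \<omega> s0" by (simp add: algebra_simps)
    ultimately have "h * \<tau> \<le> h * wphi \<omega> (s0 + 1)" by linarith
    also have "wphi \<omega> (s0 + 1) = \<omega> (exp 1 * v)" unfolding wphi_def s0_def using v by (simp add: exp_add mult.commute)
    also have "h * \<omega> (exp 1 * v) \<le> h * (D * \<omega> v + D)" using D(2)[of v] v h by (intro mult_left_mono) auto
    also have "\<dots> = (\<omega> v + 1) / 2" unfolding h_def using D by (simp add: field_simps)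
    finally have err: "h * \<tau> \<le> (\<omega> v + 1) / 2" .
    define k where "k = nat \<lfloor>\<tau> / y\<rfloor>"
    have fl: "real k = of_int \<lfloor>\<tau> / y\<rfloor>" unfolding k_def using tau0 y by simp
    have fc: "of_int \<lfloor>\<tau> / y\<rfloor> \<le> \<tau> / y \<and> \<tau> / y < of_int \<lfloor>\<tau> / y\<rfloor> + 1" by simp
    have "real k \<le> \<tau> / y" using fl fc by linarith
    then have k1: "y * real k \<le> \<tau>" using y by (simp add: pos_le_divide_eq mult.commute)
    have "\<tau> / y < real k + 1" using fl fc by linarith
    then have "\<tau> < (real k + 1) * y" using y by (simp add: pos_divide_less_eq)
    then have k2: "\<tau> \<le> y * (real k + 1)" by (simp add: mult.commute)
    have "s0 * \<tau> \<le> s0 * (y * (real k + 1))" using k2 s0 by (rule mult_left_mono)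
    moreover have "wphi_star \<omega> (y * real k) \<le> wphi_star \<omega> \<tau>"
      using y k1 by (intro star_mono[OF wf nw]) auto
    moreover have "s0 * (y * (real k + 1)) - wphi_star \<omega> (y * real k) = y * (\<Sum>l<k. (s0 - dd \<omega> y l)) + y * s0"
      using y by (simp add: sum_subtractf dd_sum[OF wf nw y] algebra_simps)
    moreover have "(\<Sum>l<k. (s0 - dd \<omega> y l)) \<le> (\<Sum>l<k. max 0 (s0 - dd \<omega> y l))"
      by (intro sum_mono) auto
    then have "y * (\<Sum>l<k. (s0 - dd \<omega> y l)) \<le> y * (\<Sum>l<k. max 0 (s0 - dd \<omega> y l))"
      using y by (intro mult_left_mono) auto
    ultimately have A: "s0 * \<tau> - wphi_star \<omega> \<tau> \<le> y * (\<Sum>l<k. max 0 (s0 - dd \<omega> y l)) + y * s0"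
      by linarith
    have "\<omega> v = wphi \<omega> s0" unfolding wphi_def s0_def using v by simp
    also have "\<dots> \<le> s0 * \<tau> - wphi_star \<omega> \<tau> + h * \<tau>" using key by simp
    finally have "\<omega> v \<le> y * (\<Sum>l<k. max 0 (s0 - dd \<omega> y l)) + y * s0 + (\<omega> v + 1) / 2"
      using A err by linarith
    moreover have "y * s0 \<le> \<omega> v / 4 + y * ln T" using lnb[OF v] unfolding s0_def .
    ultimately have "\<omega> v \<le> 4 * y * (\<Sum>l<k. max 0 (ln v - dd \<omega> y l)) + C5"
      unfolding C5_def s0_def
      using mult.assoc[of 4 y "\<Sum>l<k. max 0 (ln v - dd \<omega> y l)"] mult.assoc[of 4 y "ln T"]
        arith_aux[of "\<omega> v" "y * (\<Sum>l<k. max 0 (ln v - dd \<omega> y l))" "y * ln v" "y * ln T"] by simp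
    then show ?thesis by blast
  qed
  moreover have "C5 \<ge> 0" unfolding C5_def using y T by simp
  ultimately show ?thesis by blast
qed

end


lemma exp1_ge2: "2 \<le> exp (1::real)"
  using exp_ge_add_one_self[of 1] by simp

lemma geo: fixes c :: real
  shows "summable (\<lambda>j. min 1 (exp (c - real j))) \<and>
         (\<Sum>j. min 1 (exp (c - real j))) \<le> (if 0 \<le> c then c + 1 else 0) + 2 * min 1 (exp c)"
proof -
  define f where "f j = min 1 (exp (c - real j))" for j :: nat
  define q where "q = exp (-1::real)"
  have q: "0 < q" "q < 1" unfolding q_def by auto
  have ex: "exp (a - real j) = exp a * q ^ j" for a j
    unfolding q_def by (simp add: exp_diff exp_minus exp_of_nat_mult[symmetric] field_simps power_divide)
  have sg: "summable (\<lambda>j. exp a * q ^ j)" for a using q by (intro summable_mult) auto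
  have sf: "summable f"
  proof (rule summable_comparison_test[OF _ sg[of c]])
    have "norm (f n) \<le> exp c * q ^ n" for n
    proof -
      have "0 \<le> exp c * q ^ n" using q by simp
      then show ?thesis unfolding f_def ex by (simp add: abs_of_nonneg)
    qed
    then show "\<exists>N. \<forall>n\<ge>N. norm (f n) \<le> exp c * q ^ n" by blast
  qed
  define m where "m = nat \<lceil>c\<rceil>"
  have split: "suminf f = (\<Sum>i. f (i + m)) + (\<Sum>j<m. f j)"
    using sf by (rule suminf_split_initial_segment)
  have "(\<Sum>j<m. f j) \<le> (\<Sum>j<m. (1::real))" unfolding f_def by (intro sum_mono) auto
  also have "\<dots> = real m" by simp
  also have "\<dots> \<le> (if 0 \<le> c then c + 1 else 0)" unfolding m_def by auto
  finally have P1: "(\<Sum>j<m. f j) \<le> (if 0 \<le> c then c + 1 else 0)" .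
  have "(\<Sum>i. f (i + m)) \<le> (\<Sum>i. exp (c - real m) * q ^ i)"
  proof (rule suminf_le)
    fix i
    have "f (i + m) \<le> exp (c - real (i + m))" unfolding f_def by simp
    also have "\<dots> = exp ((c - real m) - real i)" by (simp add: algebra_simps)
    finally show "f (i + m) \<le> exp (c - real m) * q ^ i" using ex by simp
  qed (use sf sg in auto)
  also have "\<dots> = exp (c - real m) * (1 / (1 - q))" using q by (simp add: suminf_mult suminf_geometric)
  also have "\<dots> \<le> min 1 (exp c) * 2"
  proof (intro mult_mono)
    have "c \<le> real m" unfolding m_def by linarith
    then have "exp (c - real m) \<le> 1" by simp
    moreover have "exp (c - real m) \<le> exp c" by simp
    ultimately show "exp (c - real m) \<le> min 1 (exp c)" by simp
    have "q \<le> 1/2" unfolding q_def using exp1_ge2 by (simp add: exp_minus field_simps)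
    then show "1 / (1 - q) \<le> 2" using q by (simp add: field_simps)
  qed (use q in auto)
  finally have P2: "(\<Sum>i. f (i + m)) \<le> 2 * min 1 (exp c)" by simp
  show ?thesis using sf split P1 P2 unfolding f_def by simp
qed



lemma int_tail: assumes c: "c > 0"
  shows "(\<integral>\<^sup>+ u. ennreal (1 / u\<^sup>2) * indicator {c..} u \<partial>lborel) = ennreal (1 / c)"
proof -
  have "((\<lambda>u. 1 / u ^ 2) has_integral 1 / (real (2 - 1) * c ^ (2 - 1))) {c..}"
    using c by (intro has_integral_inverse_power_to_inf) auto
  then have "((\<lambda>u. 1 / u\<^sup>2) has_integral 1 / c) {c..}" by simp
  from nn_integral_has_integral_lebesgue'[OF _ this] show ?thesis by auto
qed

lemma meas1: "(\<lambda>u. ennreal (a / u\<^sup>2) * indicator {c..} u * indicator {1..} u) \<in> borel_measurable lborel"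
  by measurable

lemma cnt: assumes z: "(z::real) \<ge> 0"
  shows "ennreal z \<le> (\<Sum>j. if real j \<le> z then 1 else 0)"
proof -
  have "(\<Sum>j. if real j \<le> z then 1 else (0::ennreal)) = (\<Sum>j\<in>{..nat \<lfloor>z\<rfloor>}. if real j \<le> z then 1 else 0)"
  proof (rule suminf_finite)
    fix n assume "n \<notin> {..nat \<lfloor>z\<rfloor>}"
    then have "real n > z" using z by (simp add: not_le) linarith
    then show "(if real n \<le> z then 1 else (0::ennreal)) = 0" by simp
  qed auto
  also have "\<dots> = (\<Sum>j\<in>{..nat \<lfloor>z\<rfloor>}. (1::ennreal))"
    using z by (intro sum.cong) (auto simp: le_nat_iff le_floor_iff)
  also have "\<dots> = ennreal (real (nat \<lfloor>z\<rfloor> + 1))" by (simp add: ennreal_of_nat_eq_real_of_nat)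
  finally have eq: "(\<Sum>j. if real j \<le> z then 1 else (0::ennreal)) = ennreal (real (nat \<lfloor>z\<rfloor> + 1))" .
  have "real (nat \<lfloor>z\<rfloor> + 1) = of_int \<lfloor>z\<rfloor> + 1" using z by simp
  moreover have "z < of_int \<lfloor>z\<rfloor> + 1" by (rule real_of_int_floor_add_one_gt)
  ultimately have "z \<le> real (nat \<lfloor>z\<rfloor> + 1)" by linarith
  then show ?thesis unfolding eq by (rule ennreal_leI)
qed



lemma cnt': "ennreal (max 0 z) \<le> (\<Sum>j. if real j \<le> z then 1 else 0)"
proof (cases "z \<ge> 0")
  case True then show ?thesis using cnt[OF True] by simp
next
  case False then show ?thesis by simp
qed

lemma pointwise:
  assumes wf: "weight_function \<omega>" and nw: "normalized_weight \<omega>" and y: "y > 0" and t: "t > 0"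
    and C5: "C5 \<ge> 0" and up: "\<forall>v\<ge>1. \<exists>k. \<omega> v \<le> 4 * y * (\<Sum>l<k. max 0 (ln v - dd \<omega> y l)) + C5"
  shows "ennreal (\<omega> (t * u) / u\<^sup>2) * indicator {1..} u \<le>
    ennreal (C5 / u\<^sup>2) * indicator {1..} u +
    ennreal (4 * y) * (\<Sum>l. \<Sum>j. ennreal (1 / u\<^sup>2) * indicator {exp (dd \<omega> y l + real j) / t..} u * indicator {1..} u)"
proof (cases "u \<ge> 1")
  case False then show ?thesis by simp
next
  case u: True
  define v where "v = t * u"
  have v0: "v > 0" unfolding v_def using t u by simp
  have ind: "(if real j \<le> ln v - dd \<omega> y l then 1 else 0) = (indicator {exp (dd \<omega> y l + real j) / t..} u :: ennreal)" for l j
  proof -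
    have "real j \<le> ln v - dd \<omega> y l \<longleftrightarrow> dd \<omega> y l + real j \<le> ln v" by linarith
    also have "\<dots> \<longleftrightarrow> exp (dd \<omega> y l + real j) \<le> v" using v0 by (metis exp_le_cancel_iff exp_ln)
    also have "\<dots> \<longleftrightarrow> exp (dd \<omega> y l + real j) / t \<le> u" unfolding v_def using t by (simp add: divide_le_eq mult.commute)
    finally show ?thesis by (simp add: indicator_def)
  qed
  show ?thesis
  proof (cases "v < 1")
    case True
    then have "\<omega> (t * u) = 0" unfolding v_def[symmetric] using v0 by (intro om_small[OF wf nw]) auto
    then show ?thesis by simp
  next
    case False
    then have v1: "v \<ge> 1" by simp
    then obtain k where k: "\<omega> v \<le> 4 * y * (\<Sum>l<k. max 0 (ln v - dd \<omega> y l)) + C5" using up by blast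
    define S where "S = (\<Sum>l<k. max 0 (ln v - dd \<omega> y l))"
    have S0: "S \<ge> 0" unfolding S_def by (intro sum_nonneg) auto
    have u2: "u\<^sup>2 > 0" using u by simp
    have "\<omega> v / u\<^sup>2 \<le> (4 * y * S + C5) / u\<^sup>2" using k u2 unfolding S_def by (intro divide_right_mono) auto
    also have "\<dots> = C5 / u\<^sup>2 + (4 * y) * (S * (1 / u\<^sup>2))" by (simp add: add_divide_distrib)
    finally have "ennreal (\<omega> v / u\<^sup>2) \<le> ennreal (C5 / u\<^sup>2 + (4 * y) * (S * (1 / u\<^sup>2)))" by (rule ennreal_leI)
    also have "\<dots> = ennreal (C5 / u\<^sup>2) + ennreal (4 * y) * (ennreal S * ennreal (1 / u\<^sup>2))"
    proof -
      have a: "0 \<le> C5 / u\<^sup>2" "0 \<le> (4 * y) * (S * (1 / u\<^sup>2))" "0 \<le> S * (1 / u\<^sup>2)" "0 \<le> 4 * y" "0 \<le> 1 / u\<^sup>2"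
        using C5 S0 y u2 by auto
      have "ennreal ((4 * y) * (S * (1 / u\<^sup>2))) = ennreal (4 * y) * ennreal (S * (1 / u\<^sup>2))"
        by (rule ennreal_mult[OF a(4) a(3)])
      also have "ennreal (S * (1 / u\<^sup>2)) = ennreal S * ennreal (1 / u\<^sup>2)" by (rule ennreal_mult[OF S0 a(5)])
      finally show ?thesis using ennreal_plus[OF a(1) a(2)] by simp
    qed
    finally have 1: "ennreal (\<omega> v / u\<^sup>2) \<le> ennreal (C5 / u\<^sup>2) + ennreal (4 * y) * (ennreal S * ennreal (1 / u\<^sup>2))" .
    have "ennreal S = (\<Sum>l<k. ennreal (max 0 (ln v - dd \<omega> y l)))" unfolding S_def by simp
    also have "\<dots> \<le> (\<Sum>l<k. \<Sum>j. indicator {exp (dd \<omega> y l + real j) / t..} u)"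
    proof (intro sum_mono)
      fix l
      show "ennreal (max 0 (ln v - dd \<omega> y l)) \<le> (\<Sum>j. indicator {exp (dd \<omega> y l + real j) / t..} u)"
        using cnt'[of "ln v - dd \<omega> y l"] unfolding ind .
    qed
    also have "\<dots> \<le> (\<Sum>l. \<Sum>j. indicator {exp (dd \<omega> y l + real j) / t..} u)"
      by (intro sum_le_suminf) auto
    finally have 2: "ennreal S \<le> (\<Sum>l. \<Sum>j. indicator {exp (dd \<omega> y l + real j) / t..} u)" .
    have 3: "(\<Sum>l. \<Sum>j. indicator {exp (dd \<omega> y l + real j) / t..} u) * ennreal (1 / u\<^sup>2) =
       (\<Sum>l. \<Sum>j. ennreal (1 / u\<^sup>2) * indicator {exp (dd \<omega> y l + real j) / t..} u * indicator {1..} u)"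
      using u by (simp add: mult.commute)
    have "ennreal (\<omega> v / u\<^sup>2) \<le> ennreal (C5 / u\<^sup>2) + ennreal (4 * y) *
       (\<Sum>l. \<Sum>j. ennreal (1 / u\<^sup>2) * indicator {exp (dd \<omega> y l + real j) / t..} u * indicator {1..} u)"
    proof -
      have "ennreal S * ennreal (1 / u\<^sup>2) \<le> (\<Sum>l. \<Sum>j. indicator {exp (dd \<omega> y l + real j) / t..} u) * ennreal (1 / u\<^sup>2)"
        using 2 by (rule mult_right_mono) simp
      then have "ennreal (4 * y) * (ennreal S * ennreal (1 / u\<^sup>2)) \<le> ennreal (4 * y) *
       (\<Sum>l. \<Sum>j. ennreal (1 / u\<^sup>2) * indicator {exp (dd \<omega> y l + real j) / t..} u * indicator {1..} u)"
        unfolding 3 by (rule mult_left_mono) simp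
      then show ?thesis using 1 by (meson add_left_mono order_trans)
    qed
    then show ?thesis using u unfolding v_def by simp
  qed
qed



lemma int_piece: assumes c: "c > 0"
  shows "(\<integral>\<^sup>+ u. ennreal (1 / u\<^sup>2) * indicator {c..} u * indicator {1..} u \<partial>lborel) = ennreal (1 / max 1 c)"
proof -
  have "(\<integral>\<^sup>+ u. ennreal (1 / u\<^sup>2) * indicator {c..} u * indicator {1..} u \<partial>lborel) =
        (\<integral>\<^sup>+ u. ennreal (1 / u\<^sup>2) * indicator {max 1 c..} u \<partial>lborel)"
    by (intro nn_integral_cong) (auto simp: indicator_def)
  also have "\<dots> = ennreal (1 / max 1 c)" using c by (intro int_tail) auto
  finally show ?thesis .
qed

lemma int_rhs: assumes c: "\<And>l j. c l j > 0" and C5: "C5 \<ge> 0"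
  shows "(\<integral>\<^sup>+ u. ennreal (C5 / u\<^sup>2) * indicator {1..} u +
     ennreal a * (\<Sum>l. \<Sum>j. ennreal (1 / u\<^sup>2) * indicator {c l j..} u * indicator {1..} u) \<partial>lborel)
   = ennreal C5 + ennreal a * (\<Sum>l. \<Sum>j. ennreal (1 / max 1 (c l j)))"
proof -
  have m1: "(\<lambda>u. ennreal (1 / u\<^sup>2) * indicator {c l j..} u * indicator {1..} u) \<in> borel_measurable lborel" for l j
    by measurable
  have m2: "(\<lambda>u. \<Sum>j. ennreal (1 / u\<^sup>2) * indicator {c l j..} u * indicator {1..} u) \<in> borel_measurable lborel" for l
    by measurable
  have m3: "(\<lambda>u. \<Sum>l. \<Sum>j. ennreal (1 / u\<^sup>2) * indicator {c l j..} u * indicator {1..} u) \<in> borel_measurable lborel"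
    by measurable
  have "(\<integral>\<^sup>+ u. ennreal (C5 / u\<^sup>2) * indicator {1..} u +
     ennreal a * (\<Sum>l. \<Sum>j. ennreal (1 / u\<^sup>2) * indicator {c l j..} u * indicator {1..} u) \<partial>lborel)
    = (\<integral>\<^sup>+ u. ennreal (C5 / u\<^sup>2) * indicator {1..} u \<partial>lborel) +
      (\<integral>\<^sup>+ u. ennreal a * (\<Sum>l. \<Sum>j. ennreal (1 / u\<^sup>2) * indicator {c l j..} u * indicator {1..} u) \<partial>lborel)"
    using m3 by (intro nn_integral_add) measurable
  also have "(\<integral>\<^sup>+ u. ennreal (C5 / u\<^sup>2) * indicator {1..} u \<partial>lborel) =
      (\<integral>\<^sup>+ u. ennreal C5 * (ennreal (1 / u\<^sup>2) * indicator {1..} u) \<partial>lborel)"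
  proof (intro nn_integral_cong)
    fix u :: real
    have "ennreal (C5 / u\<^sup>2) = ennreal C5 * ennreal (1 / u\<^sup>2)"
      using C5 by (simp add: ennreal_mult[symmetric])
    then show "ennreal (C5 / u\<^sup>2) * indicator {1..} u = ennreal C5 * (ennreal (1 / u\<^sup>2) * indicator {1..} u)"
      by (simp add: mult.assoc)
  qed
  also have "\<dots> = ennreal C5 * (\<integral>\<^sup>+ u. ennreal (1 / u\<^sup>2) * indicator {1..} u \<partial>lborel)"
    by (intro nn_integral_cmult) measurable
  also have "(\<integral>\<^sup>+ u. ennreal (1 / u\<^sup>2) * indicator {1..} u \<partial>lborel) = 1"
    using int_tail[of 1] by simp
  also have "(\<integral>\<^sup>+ u. ennreal a * (\<Sum>l. \<Sum>j. ennreal (1 / u\<^sup>2) * indicator {c l j..} u * indicator {1..} u) \<partial>lborel)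
      = ennreal a * (\<integral>\<^sup>+ u. (\<Sum>l. \<Sum>j. ennreal (1 / u\<^sup>2) * indicator {c l j..} u * indicator {1..} u) \<partial>lborel)"
    using m3 by (rule nn_integral_cmult)
  also have "(\<integral>\<^sup>+ u. (\<Sum>l. \<Sum>j. ennreal (1 / u\<^sup>2) * indicator {c l j..} u * indicator {1..} u) \<partial>lborel)
     = (\<Sum>l. \<integral>\<^sup>+ u. (\<Sum>j. ennreal (1 / u\<^sup>2) * indicator {c l j..} u * indicator {1..} u) \<partial>lborel)"
    using m2 by (intro nn_integral_suminf) auto
  also have "\<dots> = (\<Sum>l. \<Sum>j. \<integral>\<^sup>+ u. (ennreal (1 / u\<^sup>2) * indicator {c l j..} u * indicator {1..} u) \<partial>lborel)"
    using m1 by (intro suminf_cong nn_integral_suminf) auto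
  also have "\<dots> = (\<Sum>l. \<Sum>j. ennreal (1 / max 1 (c l j)))"
    using c by (intro suminf_cong int_piece) auto
  finally show ?thesis by simp
qed



lemma sum_bound:
  assumes wf: "weight_function \<omega>" and nw: "normalized_weight \<omega>"
    and x: "x > 0" and y: "y > 0" and A: "A > 0"
    and hyp: "\<And>k::nat. k > 0 \<Longrightarrow>
           summable (\<lambda>l. 1 / wtheta \<omega> y (k + l)) \<and>
           (\<Sum>l. 1 / wtheta \<omega> y (k + l)) \<le> A * real k / wtheta \<omega> x k"
    and t: "t > 0"
    and N: "\<And>l. dd \<omega> y l \<le> ln t \<longleftrightarrow> l < N"
    and M: "\<And>l. dd \<omega> x l \<le> ln t \<longleftrightarrow> l < M"
  shows "(\<Sum>l. \<Sum>j. ennreal (1 / max 1 (exp (dd \<omega> y l + real j) / t)))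
     \<le> ennreal (\<omega> (exp 1 * t) / y + 2 * (real M + A * (real M + 1)))"
proof -
  define d where "d = dd \<omega> y"
  define c where "c l = ln t - d l" for l
  define B1 where "B1 l = (if 0 \<le> c l then c l + 1 else 0)" for l
  define B2 where "B2 l = (if l < M then 1 else t * exp (- d l))" for l
  have B1nn: "B1 l \<ge> 0" for l unfolding B1_def by auto
  have B2nn: "B2 l \<ge> 0" for l unfolding B2_def using t by auto
  have trm: "1 / max 1 (exp (d l + real j) / t) = min 1 (exp (c l - real j))" for l j
  proof -
    have a: "exp (d l + real j) / t > 0" using t by simp
    have "exp (c l - real j) = 1 / (exp (d l + real j) / t)"
      unfolding c_def using t by (simp add: exp_diff exp_add)
    then show ?thesis using a by (auto simp: min_def max_def field_simps)
  qed
  have inner: "(\<Sum>j. ennreal (1 / max 1 (exp (d l + real j) / t))) \<le> ennreal (B1 l) + 2 * ennreal (B2 l)" for l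
  proof -
    have g: "summable (\<lambda>j. min 1 (exp (c l - real j)))"
      "(\<Sum>j. min 1 (exp (c l - real j))) \<le> B1 l + 2 * min 1 (exp (c l))"
      using geo[of "c l"] unfolding B1_def by auto
    have "min 1 (exp (c l)) \<le> B2 l"
    proof (cases "l < M")
      case False
      then have "exp (c l) = t * exp (- d l)" unfolding c_def using t by (simp add: exp_diff exp_minus field_simps)
      then show ?thesis using False unfolding B2_def by simp
    qed (simp add: B2_def)
    then have le: "(\<Sum>j. min 1 (exp (c l - real j))) \<le> B1 l + 2 * B2 l" using g(2) by linarith
    have "(\<Sum>j. ennreal (1 / max 1 (exp (d l + real j) / t))) = (\<Sum>j. ennreal (min 1 (exp (c l - real j))))"
      unfolding trm ..
    also have "\<dots> = ennreal (\<Sum>j. min 1 (exp (c l - real j)))"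
      using g(1) by (intro suminf_ennreal2) auto
    also have "\<dots> \<le> ennreal (B1 l + 2 * B2 l)" using le by (rule ennreal_leI)
    also have "\<dots> = ennreal (B1 l) + 2 * ennreal (B2 l)"
      using B1nn[of l] B2nn[of l] by (simp add: ennreal_mult)
    finally show ?thesis .
  qed
  have "(\<Sum>l. \<Sum>j. ennreal (1 / max 1 (exp (dd \<omega> y l + real j) / t)))
      \<le> (\<Sum>l. ennreal (B1 l) + 2 * ennreal (B2 l))"
    unfolding d_def[symmetric] using inner by (intro suminf_le) auto
  also have "\<dots> = (\<Sum>l. ennreal (B1 l)) + 2 * (\<Sum>l. ennreal (B2 l))"
    by (subst suminf_add[symmetric]) auto
  finally have S: "(\<Sum>l. \<Sum>j. ennreal (1 / max 1 (exp (dd \<omega> y l + real j) / t)))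
      \<le> (\<Sum>l. ennreal (B1 l)) + 2 * (\<Sum>l. ennreal (B2 l))" .
  have "(\<Sum>l. ennreal (B1 l)) = (\<Sum>l<N. ennreal (B1 l))"
  proof (rule suminf_finite)
    fix l assume "l \<notin> {..<N}"
    then have "\<not> d l \<le> ln t" using N unfolding d_def by auto
    then show "ennreal (B1 l) = 0" unfolding B1_def c_def by auto
  qed auto
  also have "\<dots> = ennreal (\<Sum>l<N. B1 l)" using B1nn by simp
  also have "(\<Sum>l<N. B1 l) = (\<Sum>l<N. ln (exp 1 * t) - d l)"
  proof (intro sum.cong refl)
    fix l assume "l \<in> {..<N}"
    then have "d l \<le> ln t" using N unfolding d_def by auto
    then show "B1 l = ln (exp 1 * t) - d l" unfolding B1_def c_def using t by (simp add: ln_mult)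
  qed
  also have "(\<Sum>l<N. ln (exp 1 * t) - d l) \<le> \<omega> (exp 1 * t) / y"
  proof (cases "N = 0")
    case True then show ?thesis using om_nonneg[OF wf nw, of "exp 1 * t"] t y by simp
  next
    case False
    then have "d 0 \<le> ln t" using N unfolding d_def by auto
    then have "ln t \<ge> 0" using dd_nonneg[OF wf nw y, of 0] unfolding d_def by linarith
    then have "t \<ge> 1" using t by (simp add: ln_ge_zero_iff)
    then have v: "exp 1 * t \<ge> 1" using mult_mono[of 1 "exp 1" 1 t] by simp
    have "y * (\<Sum>l<N. ln (exp 1 * t) - d l) \<le> \<omega> (exp 1 * t)"
      unfolding d_def by (rule young_seq[OF wf nw y v])
    then show ?thesis using y by (simp add: field_simps mult.commute)
  qed
  finally have P1: "(\<Sum>l. ennreal (B1 l)) \<le> ennreal (\<omega> (exp 1 * t) / y)" by (simp add: ennreal_leI)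
  have h: "summable (\<lambda>i. 1 / wtheta \<omega> y (Suc M + i)) \<and>
           (\<Sum>i. 1 / wtheta \<omega> y (Suc M + i)) \<le> A * real (Suc M) / wtheta \<omega> x (Suc M)"
    using hyp[of "Suc M"] by simp
  have eq: "1 / wtheta \<omega> y (Suc M + i) = exp (- d (i + M))" for i
    using wtheta_dd[OF wf nw y, of "i + M"] unfolding d_def by (simp add: exp_minus add.commute divide_inverse)
  have sh: "B2 (i + M) = t * exp (- d (i + M))" for i unfolding B2_def by simp
  have s1: "summable (\<lambda>i. exp (- d (i + M)))" using h unfolding eq by simp
  have sB2: "summable B2"
    using summable_mult[OF s1, of t] unfolding sh[symmetric] by (simp only: summable_iff_shift)
  have "(\<Sum>i. exp (- d (i + M))) \<le> A * real (Suc M) / wtheta \<omega> x (Suc M)" using h unfolding eq by simp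
  also have "wtheta \<omega> x (Suc M) = exp (dd \<omega> x M)" by (rule wtheta_dd[OF wf nw x])
  also have "exp (dd \<omega> x M) > t"
  proof -
    have "\<not> dd \<omega> x M \<le> ln t" using M by auto
    then have "ln t < dd \<omega> x M" by simp
    then show ?thesis using t by (metis exp_less_cancel_iff exp_ln)
  qed
  then have "A * real (Suc M) / exp (dd \<omega> x M) \<le> A * real (Suc M) / t"
    using A t by (intro divide_left_mono) auto
  finally have tl: "(\<Sum>i. exp (- d (i + M))) \<le> A * real (Suc M) / t" .
  have "suminf B2 = (\<Sum>i. B2 (i + M)) + (\<Sum>l<M. B2 l)" using sB2 by (rule suminf_split_initial_segment)
  also have "(\<Sum>l<M. B2 l) = real M" unfolding B2_def by simp
  also have "(\<Sum>i. B2 (i + M)) = t * (\<Sum>i. exp (- d (i + M)))" unfolding sh using s1 by (rule suminf_mult)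
  also have "\<dots> \<le> A * (real M + 1)" using tl t by (simp add: field_simps)
  finally have B2s: "suminf B2 \<le> A * (real M + 1) + real M" by simp
  have "(\<Sum>l. ennreal (B2 l)) = ennreal (suminf B2)" using B2nn sB2 by (intro suminf_ennreal2) auto
  also have "\<dots> \<le> ennreal (real M + A * (real M + 1))" using B2s by (intro ennreal_leI) simp
  finally have P2: "(\<Sum>l. ennreal (B2 l)) \<le> ennreal (real M + A * (real M + 1))" .
  have "(\<Sum>l. \<Sum>j. ennreal (1 / max 1 (exp (dd \<omega> y l + real j) / t)))
     \<le> ennreal (\<omega> (exp 1 * t) / y) + 2 * ennreal (real M + A * (real M + 1))"
    using S P1 P2 by (meson add_mono mult_left_mono order_trans zero_le)
  also have "\<dots> = ennreal (\<omega> (exp 1 * t) / y + 2 * (real M + A * (real M + 1)))"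
    using om_nonneg[OF wf nw, of "exp 1 * t"] t y A by (simp add: ennreal_mult ennreal_plus)
  finally show ?thesis .
qed



theorem corollary5p12:
  fixes \<omega> :: "real \<Rightarrow> real"
  assumes "weight_function \<omega>" and "normalized_weight \<omega>"
    and "x > 0" and "y > 0" and "A > 0"
    and "\<And>k::nat. k > 0 \<Longrightarrow>
           summable (\<lambda>l. 1 / wtheta \<omega> y (k + l)) \<and>
           (\<Sum>l. 1 / wtheta \<omega> y (k + l)) \<le> A * real k / wtheta \<omega> x k"
  shows "strong_weight \<omega>"
proof -
  note wf = assms(1) and nw = assms(2) and x = assms(3) and y = assms(4) and A = assms(5) and hyp = assms(6)
  obtain C5 where C5: "C5 \<ge> 0" "\<forall>v\<ge>1. \<exists>k. \<omega> v \<le> 4 * y * (\<Sum>l<k. max 0 (ln v - dd \<omega> y l)) + C5"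
    using upper[OF wf nw y] by blast
  obtain D where D: "D \<ge> 1" "\<And>v. v \<ge> 0 \<Longrightarrow> \<omega> (exp 1 * v) \<le> D * \<omega> v + D"
    using om_doubling[OF wf nw] by blast
  define K where "K = 4 + 8 * y * (1 + A) / x"
  have K0: "K \<ge> 0" unfolding K_def using x y A by simp
  define C where "C = C5 + 8 * y * A + K * D + 1"
  have C0: "C > 0" unfolding C_def using C5 y A K0 D by (simp add: add_nonneg_pos)
  show ?thesis unfolding strong_weight_def
  proof (intro exI[of _ C] conjI allI impI)
    show "C > 0" by (rule C0)
    fix t :: real assume t: "t > 0"
    obtain N where N: "\<And>l. dd \<omega> y l \<le> ln t \<longleftrightarrow> l < N"
      using count_ex[OF wf nw y t] by blast
    obtain M where M: "\<And>l. dd \<omega> x l \<le> ln t \<longleftrightarrow> l < M" and Mb: "x * real M \<le> \<omega> (exp 1 * t)"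
      using count_ex[OF wf nw x t] by blast
    define cc where "cc l j = exp (dd \<omega> y l + real j) / t" for l j
    have cc0: "cc l j > 0" for l j unfolding cc_def using t by simp
    have "(\<integral>\<^sup>+ u. ennreal (\<omega> (t * u) / u\<^sup>2) * indicator {1..} u \<partial>lborel)
       \<le> (\<integral>\<^sup>+ u. ennreal (C5 / u\<^sup>2) * indicator {1..} u +
     ennreal (4 * y) * (\<Sum>l. \<Sum>j. ennreal (1 / u\<^sup>2) * indicator {cc l j..} u * indicator {1..} u) \<partial>lborel)"
      unfolding cc_def by (intro nn_integral_mono pointwise[OF wf nw y t C5])
    also have "\<dots> = ennreal C5 + ennreal (4 * y) * (\<Sum>l. \<Sum>j. ennreal (1 / max 1 (cc l j)))"
      by (rule int_rhs[OF cc0 C5(1)])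
    also have "\<dots> \<le> ennreal C5 + ennreal (4 * y) * ennreal (\<omega> (exp 1 * t) / y + 2 * (real M + A * (real M + 1)))"
      unfolding cc_def by (intro add_left_mono mult_left_mono sum_bound[OF wf nw x y A hyp t N M]) auto
    also have "\<dots> = ennreal (C5 + 4 * y * (\<omega> (exp 1 * t) / y + 2 * (real M + A * (real M + 1))))"
      using C5 y A om_nonneg[OF wf nw, of "exp 1 * t"] t by (simp add: ennreal_mult ennreal_plus)
    also have "\<dots> \<le> ennreal (C * \<omega> t + C)"
    proof (rule ennreal_leI)
      define W where "W = \<omega> (exp 1 * t)"
      have W0: "W \<ge> 0" unfolding W_def using t by (intro om_nonneg[OF wf nw]) simp
      have w0: "\<omega> t \<ge> 0" using t by (intro om_nonneg[OF wf nw]) simp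
      have WD: "W \<le> D * \<omega> t + D" unfolding W_def using D(2)[of t] t by simp
      have Mx: "real M \<le> W / x" using Mb x unfolding W_def by (simp add: field_simps)
      have "C5 + 4 * y * (W / y + 2 * (real M + A * (real M + 1)))
            = C5 + 8 * y * A + 4 * W + (8 * y * (1 + A)) * real M"
        using y by (simp add: field_simps)
      also have "\<dots> \<le> C5 + 8 * y * A + 4 * W + (8 * y * (1 + A)) * (W / x)"
        using Mx y A by (intro add_left_mono mult_left_mono) auto
      also have "\<dots> = C5 + 8 * y * A + K * W" unfolding K_def using x by (simp add: field_simps)
      also have "\<dots> \<le> C5 + 8 * y * A + K * (D * \<omega> t + D)" using WD K0 by (intro add_left_mono mult_left_mono)
      also have "\<dots> \<le> C * \<omega> t + C"
      proof -
        have "K * (D * \<omega> t) \<le> C * \<omega> t"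
        proof -
          have "K * D \<le> C" unfolding C_def using C5 y A by simp
          then show ?thesis using w0 by (simp add: mult.assoc[symmetric] mult_right_mono)
        qed
        moreover have "C5 + 8 * y * A + K * D \<le> C" unfolding C_def by simp
        ultimately show ?thesis by (simp add: distrib_left)
      qed
      finally show "C5 + 4 * y * (\<omega> (exp 1 * t) / y + 2 * (real M + A * (real M + 1))) \<le> C * \<omega> t + C"
        unfolding W_def .
    qed
    finally show "(\<integral>\<^sup>+ u. ennreal (\<omega> (t * u) / u\<^sup>2) * indicator {1..} u \<partial>lborel) \<le> ennreal (C * \<omega> t + C)" .
  qed
qed


end
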